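(* Let $m$ be a positive integer and $n=m(m+1)/2$. Write $\prod_{i=1}^m(1-X^i)=\sum_{i=0}^n c_iX^i$. Then the matrix $\mathsf P$ with rows indexed by integers $k\ge0$, columns indexed by non-empty subsets $S\subseteq[1,m]$, and $(k,S)$ entry $p(k,S)$, has rank $n$ over $\mathbb{Q}$. Moreover, for all $k\ge n$ and all non-empty $S\subseteq[1,m]$, $$p(k,S)=-\sum_{j=k-n}^{k-1}c_{k-j}\,p(j,S).$$
   Context: For $S\subseteq\mathbb{N}$ and $k\in\mathbb{Z}$, $p(k,S)$ is the number of partitions of $k$ all of whose parts lie in $S$ ($p(0,S)=1$). $[1,m]=\{1,\dots,m\}$. *)

theory Defs
  imports Main "HOL-Library.Multiset" "HOL-Library.Function_Algebras"
    "HOL-Computational_Algebra.Polynomial"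
begin

definition part_count :: "nat \<Rightarrow> nat set \<Rightarrow> nat" where
  "part_count k S = card {M :: nat multiset. set_mset M \<subseteq> S \<and> sum_mset M = k}"

(* the column of the matrix P indexed by S, as a vector in Q^N (rows k >= 0) *)
definition P_column :: "nat set \<Rightarrow> (nat \<Rightarrow> rat)" where
  "P_column S = (\<lambda>k. of_nat (part_count k S))"

definition qscale :: "rat \<Rightarrow> (nat \<Rightarrow> rat) \<Rightarrow> (nat \<Rightarrow> rat)" where
  "qscale c f = (\<lambda>k. c * f k)"

definition P_rank :: "nat \<Rightarrow> nat" where
  "P_rank m = vector_space.dim qscale {P_column S | S. S \<subseteq> {1..m} \<and> S \<noteq> {}}"

definition cpoly :: "nat \<Rightarrow> int poly" where
  "cpoly m = (\<Prod>i\<in>{1..m}. 1 - monom 1 i)"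

end

theory Submission imports Defs "HOL-Computational_Algebra.Computational_Algebra" begin

definition PS :: "nat \<Rightarrow> nat set \<Rightarrow> nat multiset set" where
  "PS k S = {M. set_mset M \<subseteq> S \<and> sum_mset M = k}"

lemma size_le_sum: "0 \<notin> set_mset M \<Longrightarrow> size M \<le> sum_mset (M::nat multiset)"
  by (induction M) auto

lemma finite_PS:
  assumes "finite S" "0 \<notin> S" shows "finite (PS k S)"
proof -
  have "PS k S \<subseteq> (\<Union>n\<in>{..k}. multisets_of_size S n)"
  proof
    fix M assume M: "M \<in> PS k S"
    then have s: "set_mset M \<subseteq> S" and k: "sum_mset M = k" unfolding PS_def by auto
    have "0 \<notin> set_mset M" using s assms(2) by blast
    then have "size M \<le> k" using size_le_sum k by metis
    then show "M \<in> (\<Union>n\<in>{..k}. multisets_of_size S n)"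
      using s unfolding multisets_of_size_def by blast
  qed
  moreover have "finite (\<Union>n\<in>{..k}. multisets_of_size S n)" using assms(1) by auto
  ultimately show ?thesis by (rule finite_subset)
qed

lemma part_count_PS: "part_count k S = card (PS k S)"
  unfolding part_count_def PS_def ..

lemma part_count_empty: "part_count k {} = (if k = 0 then 1 else 0)"
proof -
  have "PS k {} = (if k = 0 then {{#}} else {})" unfolding PS_def by auto
  thus ?thesis by (simp add: part_count_PS)
qed

lemma part_count_insert:
  assumes "finite S" "0 \<notin> S" "s \<notin> S" "s > 0"
  shows "part_count k (insert s S) = part_count k S + (if s \<le> k then part_count (k - s) (insert s S) else 0)"
proof -
  let ?A1 = "{M \<in> PS k (insert s S). s \<notin># M}"
  let ?A2 = "{M \<in> PS k (insert s S). s \<in># M}"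
  have fin: "finite (PS j (insert s S))" for j using assms by (intro finite_PS) auto
  have eq: "PS k (insert s S) = ?A1 \<union> ?A2" by auto
  have A1: "?A1 = PS k S" unfolding PS_def using assms(3) by auto
  have A2: "?A2 = (if s \<le> k then add_mset s ` PS (k - s) (insert s S) else {})"
  proof (cases "s \<le> k")
    case True
    have "?A2 = add_mset s ` PS (k - s) (insert s S)"
    proof (intro equalityI subsetI)
      fix M assume M: "M \<in> ?A2"
      then have Meq: "M = add_mset s (M - {#s#})" by auto
      have "sum_mset M = sum_mset (add_mset s (M - {#s#}))" using Meq by (rule arg_cong)
      also have "\<dots> = s + sum_mset (M - {#s#})" by simp
      finally have "sum_mset M = s + sum_mset (M - {#s#})" .
      moreover have "set_mset (M - {#s#}) \<subseteq> set_mset M" by (auto dest: in_diffD)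
      ultimately have "M - {#s#} \<in> PS (k - s) (insert s S)"
        using M unfolding PS_def by auto
      with Meq show "M \<in> add_mset s ` PS (k - s) (insert s S)" by blast
    next
      fix M assume "M \<in> add_mset s ` PS (k - s) (insert s S)"
      then show "M \<in> ?A2" using True unfolding PS_def by auto
    qed
    then show ?thesis using True by simp
  next
    case False
    have "?A2 = {}"
    proof (intro equalityI subsetI)
      fix M assume M: "M \<in> ?A2"
      then have Meq: "M = add_mset s (M - {#s#})" by auto
      have "sum_mset M = sum_mset (add_mset s (M - {#s#}))" using Meq by (rule arg_cong)
      also have "\<dots> = s + sum_mset (M - {#s#})" by simp
      finally have "sum_mset M = s + sum_mset (M - {#s#})" .
      then have "s \<le> sum_mset M" by simp
      then show "M \<in> {}" using M False unfolding PS_def by auto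
    qed auto
    then show ?thesis using False by simp
  qed
  have "card (PS k (insert s S)) = card ?A1 + card ?A2"
    by (subst eq, rule card_Un_disjoint) (use fin in auto)
  also have "card ?A2 = (if s \<le> k then card (PS (k - s) (insert s S)) else 0)"
    unfolding A2 by (auto intro!: card_image inj_onI)
  finally show ?thesis unfolding part_count_PS A1 .
qed

definition PF :: "nat set \<Rightarrow> 'a::comm_ring_1 fps" where
  "PF S = Abs_fps (\<lambda>k. of_nat (part_count k S))"

definition QF :: "nat set \<Rightarrow> 'a::comm_ring_1 fps" where
  "QF S = (\<Prod>i\<in>S. 1 - fps_X ^ i)"

lemma PF_insert:
  assumes "finite S" "0 \<notin> S" "s \<notin> S" "s > 0"
  shows "(1 - fps_X ^ s) * PF (insert s S) = (PF S :: 'a::comm_ring_1 fps)"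
proof (rule fps_ext)
  fix k
  show "((1 - fps_X ^ s) * PF (insert s S)) $ k = (PF S :: 'a fps) $ k"
    using part_count_insert[OF assms, of k]
    by (simp add: PF_def algebra_simps fps_X_power_mult_nth)
qed

lemma QF_PF:
  assumes "finite S" "0 \<notin> S"
  shows "QF S * PF S = (1 :: 'a::comm_ring_1 fps)"
  using assms
proof (induction S rule: finite_induct)
  case empty
  show ?case by (simp add: QF_def PF_def part_count_empty fps_eq_iff)
next
  case (insert s S)
  have "QF (insert s S) * PF (insert s S) = QF S * ((1 - fps_X ^ s) * PF (insert s S) :: 'a fps)"
    using insert by (simp add: QF_def mult_ac)
  also have "\<dots> = QF S * PF S" using insert by (subst PF_insert) auto
  finally show ?case using insert by simp
qed

lemma QF_insert: "finite T \<Longrightarrow> s \<notin> T \<Longrightarrow> (QF (insert s T) :: 'a::comm_ring_1 fps) $ k = (QF T) $ k - (if s \<le> k then QF T $ (k - s) else 0)"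
proof -
  assume a: "finite T" "s \<notin> T"
  have "QF (insert s T) = (1 - fps_X ^ s) * (QF T :: 'a fps)" using a by (simp add: QF_def)
  then have "(QF (insert s T) :: 'a fps) $ k = ((1 - fps_X ^ s) * (QF T :: 'a fps)) $ k" by simp
  also have "\<dots> = (QF T) $ k - (if s \<le> k then QF T $ (k - s) else 0)"
    by (simp add: left_diff_distrib fps_X_power_mult_nth)
  finally show ?thesis .
qed

lemma QF_nth_zero:
  assumes "finite T" "k > \<Sum>T"
  shows "(QF T :: 'a::comm_ring_1 fps) $ k = 0"
  using assms
proof (induction T arbitrary: k rule: finite_induct)
  case empty then show ?case by (simp add: QF_def)
next
  case (insert s T)
  then show ?case using QF_insert[of T s k, where 'a='a] insert.IH[of k] insert.IH[of "k-s"] by simp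
qed

lemma QF_nth_0: "finite T \<Longrightarrow> 0 \<notin> T \<Longrightarrow> (QF T :: 'a::comm_ring_1 fps) $ 0 = 1"
proof (induction T rule: finite_induct)
  case empty then show ?case by (simp add: QF_def)
next
  case (insert s T)
  then show ?case using QF_insert[of T s 0, where 'a='a] by simp
qed


lemma tri_Suc: "Suc (m::nat) * (Suc m + 1) div 2 = m * (m + 1) div 2 + Suc m"
proof -
  have "Suc m * (Suc m + 1) = m * (m + 1) + 2 * Suc m" by (simp add: algebra_simps)
  then show ?thesis by simp
qed

lemma tri_ge: "(m::nat) \<le> m * (m + 1) div 2"
proof (cases m)
  case 0 then show ?thesis by simp
next
  case (Suc j)
  have "m * 2 \<le> m * (m + 1)" using Suc by (intro mult_le_mono2) simp
  then have "(m * 2) div 2 \<le> m * (m + 1) div 2" by (rule div_le_mono)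
  then show ?thesis by simp
qed

lemma sum_Icc_tri: "\<Sum>{1..m::nat} = m * (m + 1) div 2"
  by (simp add: Sum_Icc_nat)

lemma QF_full_PF:
  assumes "S \<subseteq> {1..m}"
  shows "QF {1..m} * PF S = (QF ({1..m} - S) :: 'a::comm_ring_1 fps)"
proof -
  have fS: "finite S" using assms finite_subset by blast
  have "QF {1..m} = (QF ({1..m} - S) :: 'a fps) * QF S"
    unfolding QF_def using assms by (rule prod.subset_diff) simp
  then have "QF {1..m} * PF S = (QF ({1..m} - S) :: 'a fps) * (QF S * PF S)" by (simp add: mult_ac)
  also have "QF S * PF S = (1 :: 'a fps)" using fS assms by (intro QF_PF) auto
  finally show ?thesis by simp
qed

lemma sum_proper:
  fixes m :: nat
  assumes "S \<subseteq> {1..m}" "S \<noteq> {}"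
  shows "\<Sum>({1..m} - S) < m * (m + 1) div 2"
proof -
  have "\<Sum>{1..m} = \<Sum>({1..m} - S) + \<Sum>S"
    using assms by (subst sum.subset_diff[of S]) auto
  moreover obtain x where "x \<in> S" using assms by blast
  moreover have "finite S" using assms finite_subset by blast
  moreover have "x \<le> \<Sum>S" using member_le_sum[of x S "\<lambda>y. y"] \<open>x \<in> S\<close> \<open>finite S\<close> by simp
  ultimately have "\<Sum>{1..m} \<ge> \<Sum>({1..m} - S) + x" by linarith
  moreover have "x \<ge> 1" using \<open>x \<in> S\<close> assms by auto
  ultimately show ?thesis using sum_Icc_tri[of m] by linarith
qed

lemma cpoly_coeff: "coeff (cpoly m) i = (QF {1..m} :: int fps) $ i"
proof -
  have "fps_of_poly (cpoly m) = (QF {1..m} :: int fps)"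
    by (simp add: cpoly_def QF_def fps_of_poly_prod fps_of_poly_diff fps_of_poly_monom')
  moreover have "coeff (cpoly m) i = fps_of_poly (cpoly m) $ i" by simp
  ultimately show ?thesis by simp
qed

lemma recurrence:
  assumes "m > 0" "n = m * (m + 1) div 2" "k \<ge> n" "S \<subseteq> {1..m}" "S \<noteq> {}"
  shows "int (part_count k S) =
         - (\<Sum>j = k - n..k - 1. coeff (cpoly m) (k - j) * int (part_count j S))"
proof -
  define c where "c = (\<lambda>i. (QF {1..m} :: int fps) $ i)"
  define p where "p = (\<lambda>j. int (part_count j S))"
  have n1: "n \<ge> 1" using assms(1,2) tri_ge[of m] by linarith
  have c0: "c 0 = 1" unfolding c_def by (rule QF_nth_0) auto
  have cz: "c i = 0" if "i > n" for i
    unfolding c_def using that assms(2) sum_Icc_tri[of m] by (intro QF_nth_zero) auto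
  have "(QF {1..m} * PF S :: int fps) $ k = (QF ({1..m} - S) :: int fps) $ k"
    using QF_full_PF[OF assms(4), where 'a=int] by simp
  also have "\<dots> = 0" using sum_proper[OF assms(4,5)] assms(2,3) by (intro QF_nth_zero) auto
  finally have "(\<Sum>i=0..k. c i * p (k - i)) = 0"
    by (simp add: fps_mult_nth c_def p_def PF_def)
  moreover have "(\<Sum>i=0..k. c i * p (k - i)) = (\<Sum>i=0..n. c i * p (k - i))"
    using assms(3) cz by (intro sum.mono_neutral_right) auto
  moreover have "(\<Sum>i=0..n. c i * p (k - i)) = c 0 * p k + (\<Sum>i=1..n. c i * p (k - i))"
    by (subst sum.atLeast_Suc_atMost) auto
  moreover have "(\<Sum>i=1..n. c i * p (k - i)) = (\<Sum>j = k - n..k - 1. c (k - j) * p j)"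
    using assms(3) n1
    by (intro sum.reindex_bij_witness[of _ "\<lambda>j. k - j" "\<lambda>i. k - i"]) auto
  ultimately have "p k = - (\<Sum>j = k - n..k - 1. c (k - j) * p j)" using c0 by simp
  then show ?thesis unfolding p_def c_def cpoly_coeff .
qed


interpretation Q: vector_space qscale
  by unfold_locales (auto simp: qscale_def fun_eq_iff algebra_simps)

definition mulseq :: "rat fps \<Rightarrow> (nat \<Rightarrow> rat) \<Rightarrow> (nat \<Rightarrow> rat)" where
  "mulseq p f = fps_nth (p * Abs_fps f)"

lemma Abs_fps_nth [simp]: "Abs_fps (fps_nth f) = f"
  by (simp add: fps_eq_iff)

lemma Abs_fps_scale': "Abs_fps (\<lambda>k. c * x k) = fps_const c * Abs_fps (x :: nat \<Rightarrow> rat)"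
  by (simp add: fps_eq_iff fps_mult_left_const_nth)

lemma Abs_fps_add: "Abs_fps (f + g) = Abs_fps f + Abs_fps g"
  by (simp add: fps_eq_iff)

lemma Abs_fps_scale: "Abs_fps (qscale c f) = fps_const c * Abs_fps f"
  by (simp add: fps_eq_iff qscale_def)

lemma lin: "Vector_Spaces.linear qscale qscale (mulseq p)"
proof -
  have "p * (fps_const c * A) = fps_const c * (p * A)" for c and A :: "rat fps" by (simp add: mult_ac)
  note eq = this
  show ?thesis
  unfolding Vector_Spaces.linear_iff
  using Q.vector_space_axioms
  by (auto simp: mulseq_def Abs_fps_add Abs_fps_scale Abs_fps_scale' distrib_left fun_eq_iff qscale_def eq)
qed

lemma span_mulseq: "Q.span (mulseq p ` A) = mulseq p ` Q.span A"
proof -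
  interpret L: Vector_Spaces.linear qscale qscale "mulseq p" by (rule lin)
  show ?thesis by (rule L.span_image)
qed

lemma mulseq_mulseq: "mulseq p (mulseq q f) = mulseq (p * q) f"
  by (simp add: mulseq_def mult_ac)

lemma mulseq_1: "mulseq 1 f = f"
  by (simp add: mulseq_def fun_eq_iff)

lemma mulseq_QF: "finite T \<Longrightarrow> s \<notin> T \<Longrightarrow> mulseq (1 - fps_X ^ s) (fps_nth (QF T)) = fps_nth (QF (insert s T))"
  by (simp add: mulseq_def QF_def)

definition dl :: "nat \<Rightarrow> nat \<Rightarrow> rat" where
  "dl i = (\<lambda>k. if k = i then 1 else 0)"

lemma dl_step: "dl (e + s) = dl e - mulseq (1 - fps_X ^ s) (dl e)"
  by (auto simp: fun_eq_iff dl_def mulseq_def left_diff_distrib fps_X_power_mult_nth)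

definition G_all :: "nat \<Rightarrow> (nat \<Rightarrow> rat) set" where
  "G_all m = (\<lambda>T. fps_nth (QF T :: rat fps)) ` {T. T \<subseteq> {1..m}}"

definition G_pr :: "nat \<Rightarrow> (nat \<Rightarrow> rat) set" where
  "G_pr m = (\<lambda>T. fps_nth (QF T :: rat fps)) ` {T. T \<subseteq> {1..m} \<and> T \<noteq> {1..m}}"

lemma mulseq_G_all: "mulseq (1 - fps_X ^ Suc m) ` G_all m \<subseteq> G_all (Suc m)"
proof
  fix x assume "x \<in> mulseq (1 - fps_X ^ Suc m) ` G_all m"
  then obtain T where T: "T \<subseteq> {1..m}" "x = mulseq (1 - fps_X ^ Suc m) (fps_nth (QF T))"
    unfolding G_all_def by auto
  have fT: "finite T" using T finite_subset by blast
  have ns: "Suc m \<notin> T" using T by auto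
  have "x = fps_nth (QF (insert (Suc m) T))" unfolding T(2) by (rule mulseq_QF[OF fT ns])
  moreover have "insert (Suc m) T \<subseteq> {1..Suc m}" using T by auto
  ultimately show "x \<in> G_all (Suc m)" unfolding G_all_def by blast
qed

lemma mulseq_G_pr: "mulseq (1 - fps_X ^ Suc m) ` G_pr m \<subseteq> G_pr (Suc m)"
proof
  fix x assume "x \<in> mulseq (1 - fps_X ^ Suc m) ` G_pr m"
  then obtain T where T: "T \<subseteq> {1..m}" "T \<noteq> {1..m}" "x = mulseq (1 - fps_X ^ Suc m) (fps_nth (QF T))"
    unfolding G_pr_def by auto
  have fT: "finite T" using T finite_subset by blast
  have ns: "Suc m \<notin> T" using T by auto
  have "x = fps_nth (QF (insert (Suc m) T))" unfolding T(3) by (rule mulseq_QF[OF fT ns])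
  moreover have "insert (Suc m) T \<subseteq> {1..Suc m}" using T by auto
  moreover have "insert (Suc m) T \<noteq> {1..Suc m}"
  proof
    assume "insert (Suc m) T = {1..Suc m}"
    then have "{1..m} \<subseteq> T"
    proof (intro subsetI)
      fix y assume eq: "insert (Suc m) T = {1..Suc m}" and y: "y \<in> {1..m}"
      then have "y \<in> insert (Suc m) T" by simp
      then show "y \<in> T" using y by auto
    qed
    then show False using T by auto
  qed
  ultimately show "x \<in> G_pr (Suc m)" unfolding G_pr_def by blast
qed

lemma G_all_mono: "G_all m \<subseteq> G_all (Suc m)"
  unfolding G_all_def by (intro image_mono) auto

lemma G_all_pr: "G_all m \<subseteq> G_pr (Suc m)"
  unfolding G_pr_def G_all_def by (intro image_mono) auto

lemma dl_all: "d \<le> m * (m + 1) div 2 \<Longrightarrow> dl d \<in> Q.span (G_all m)"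
proof (induction m arbitrary: d)
  case 0
  then have "dl d = fps_nth (QF {} :: rat fps)" by (auto simp: QF_def dl_def fun_eq_iff)
  then show ?case unfolding G_all_def by (intro Q.span_base) auto
next
  case (Suc m)
  show ?case
  proof (cases "d \<le> m * (m + 1) div 2")
    case True
    then show ?thesis using Suc.IH Q.span_mono[OF G_all_mono] by blast
  next
    case False
    define e where "e = d - Suc m"
    have de: "d = e + Suc m" using False tri_ge[of m] unfolding e_def by linarith
    have e: "e \<le> m * (m + 1) div 2" using Suc.prems tri_Suc[of m] de by linarith
    have "dl e \<in> Q.span (G_all (Suc m))" using Suc.IH[OF e] Q.span_mono[OF G_all_mono] by blast
    moreover have "mulseq (1 - fps_X ^ Suc m) (dl e) \<in> Q.span (G_all (Suc m))"
    proof -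
      have "mulseq (1 - fps_X ^ Suc m) (dl e) \<in> mulseq (1 - fps_X ^ Suc m) ` Q.span (G_all m)"
        using Suc.IH[OF e] by blast
      also have "\<dots> = Q.span (mulseq (1 - fps_X ^ Suc m) ` G_all m)" by (rule span_mulseq[symmetric])
      also have "\<dots> \<subseteq> Q.span (G_all (Suc m))" by (rule Q.span_mono[OF mulseq_G_all])
      finally show ?thesis .
    qed
    ultimately show ?thesis unfolding de dl_step by (rule Q.span_diff)
  qed
qed

lemma dl_pr: "d < m * (m + 1) div 2 \<Longrightarrow> dl d \<in> Q.span (G_pr m)"
proof (induction m arbitrary: d)
  case 0
  then show ?case by simp
next
  case (Suc m)
  show ?case
  proof (cases "d \<le> m * (m + 1) div 2")
    case True
    then show ?thesis using dl_all Q.span_mono[OF G_all_pr] by blast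
  next
    case False
    define e where "e = d - Suc m"
    have de: "d = e + Suc m" using False tri_ge[of m] unfolding e_def by linarith
    have e: "e < m * (m + 1) div 2" using Suc.prems tri_Suc[of m] de by linarith
    have "dl e \<in> Q.span (G_pr (Suc m))" using dl_all[of e m] e Q.span_mono[OF G_all_pr] by auto
    moreover have "mulseq (1 - fps_X ^ Suc m) (dl e) \<in> Q.span (G_pr (Suc m))"
    proof -
      have "mulseq (1 - fps_X ^ Suc m) (dl e) \<in> mulseq (1 - fps_X ^ Suc m) ` Q.span (G_pr m)"
        using Suc.IH[OF e] by blast
      also have "\<dots> = Q.span (mulseq (1 - fps_X ^ Suc m) ` G_pr m)" by (rule span_mulseq[symmetric])
      also have "\<dots> \<subseteq> Q.span (G_pr (Suc m))" by (rule Q.span_mono[OF mulseq_G_pr])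
      finally show ?thesis .
    qed
    ultimately show ?thesis unfolding de dl_step by (rule Q.span_diff)
  qed
qed

lemma sum_fun_apply: "(\<Sum>i\<in>A. g i) k = (\<Sum>i\<in>A. (g i k :: rat))"
  by (induction A rule: infinite_finite_induct) auto

lemma sum_delta_aux: "(\<Sum>i<(n::nat). f i * (if x = i then 1 else 0)) = (if x < n then f x else (0::rat))"
proof -
  have "(\<Sum>i<n. f i * (if x = i then 1 else 0)) = (\<Sum>i<n. if i = x then f i else 0)"
    by (rule sum.cong) auto
  also have "\<dots> = (if x < n then f x else 0)" by (induction n) auto
  finally show ?thesis .
qed

lemma support_in_span:
  assumes "\<And>k. k \<ge> n \<Longrightarrow> f k = 0"
  shows "f \<in> Q.span (dl ` {..<n})"
proof -
  have "f = (\<Sum>i<n. qscale (f i) (dl i))"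
    using assms by (auto simp: fun_eq_iff sum_fun_apply qscale_def dl_def not_le sum_delta_aux)
  also have "\<dots> \<in> Q.span (dl ` {..<n})"
    by (intro Q.span_sum Q.span_scale Q.span_base) auto
  finally show ?thesis .
qed

lemma G_pr_span: "G_pr m \<subseteq> Q.span (dl ` {..<m * (m + 1) div 2})"
proof
  fix x assume "x \<in> G_pr m"
  then obtain T where T: "T \<subseteq> {1..m}" "T \<noteq> {1..m}" "x = fps_nth (QF T :: rat fps)"
    unfolding G_pr_def by auto
  define S where "S = {1..m} - T"
  have S: "S \<subseteq> {1..m}" "S \<noteq> {}" "{1..m} - S = T" using T unfolding S_def by auto
  have fT: "finite T" using T finite_subset by blast
  show "x \<in> Q.span (dl ` {..<m * (m + 1) div 2})"
    unfolding T(3)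
    by (rule support_in_span) (use sum_proper[OF S(1,2)] S(3) fT in \<open>auto intro!: QF_nth_zero\<close>)
qed

lemma inj_dl: "inj dl"
proof (rule injI)
  fix i j assume "dl i = dl j"
  then have "dl i i = dl j i" by simp
  then show "i = j" by (simp add: dl_def split: if_splits)
qed

lemma indep_dl: "Q.independent (dl ` {..<n})"
proof
  assume "Q.dependent (dl ` {..<n})"
  then obtain u where u: "\<exists>v\<in>dl ` {..<n}. u v \<noteq> 0" "(\<Sum>v\<in>dl ` {..<n}. qscale (u v) v) = 0"
    using Q.dependent_finite by blast
  then obtain i where i: "i < n" "u (dl i) \<noteq> 0" by auto
  have "0 = (\<Sum>v\<in>dl ` {..<n}. qscale (u v) v) i" using u(2) by simp
  also have "\<dots> = (\<Sum>j<n. u (dl j) * dl j i)"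
    by (simp add: sum_fun_apply sum.reindex inj_on_subset[OF inj_dl] qscale_def)
  also have "\<dots> = (\<Sum>j<n. if j = i then u (dl j) else 0)"
    by (intro sum.cong) (auto simp: dl_def)
  also have "\<dots> = u (dl i)" using i by simp
  finally show False using i by simp
qed


lemma rank:
  assumes "m > 0" and "n = m * (m + 1) div 2"
  shows "P_rank m = n"
proof -
  define D where "D = (QF {1..m} :: rat fps)"
  define E where "E = inverse D"
  define \<Delta> where "\<Delta> = dl ` {..<n}"
  have D0: "D $ 0 = 1" unfolding D_def by (rule QF_nth_0) auto
  have ED: "E * D = 1" unfolding E_def using D0 by (intro inverse_mult_eq_1) simp
  have col: "P_column S = mulseq E (fps_nth (QF ({1..m} - S)))" if S: "S \<subseteq> {1..m}" for S
  proof -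
    have "D * PF S = QF ({1..m} - S)" unfolding D_def by (rule QF_full_PF[OF S])
    then have "E * (D * PF S) = E * QF ({1..m} - S)" by simp
    then have "PF S = E * QF ({1..m} - S)" using ED by (simp add: mult.assoc[symmetric])
    have "P_column S = fps_nth (PF S :: rat fps)"
      unfolding P_column_def PF_def by (simp add: fun_eq_iff)
    also have "\<dots> = fps_nth (E * QF ({1..m} - S))" using \<open>PF S = _\<close> by simp
    also have "\<dots> = mulseq E (fps_nth (QF ({1..m} - S)))" unfolding mulseq_def by simp
    finally show ?thesis .
  qed
  have C: "{P_column S | S. S \<subseteq> {1..m} \<and> S \<noteq> {}} = mulseq E ` G_pr m"
  proof (intro equalityI subsetI)
    fix x assume "x \<in> {P_column S | S. S \<subseteq> {1..m} \<and> S \<noteq> {}}"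
    then obtain S where S: "S \<subseteq> {1..m}" "S \<noteq> {}" "x = P_column S" by auto
    have "{1..m} - S \<subseteq> {1..m}" "{1..m} - S \<noteq> {1..m}" using S by auto
    then show "x \<in> mulseq E ` G_pr m" unfolding S(3) col[OF S(1)] G_pr_def by blast
  next
    fix x assume "x \<in> mulseq E ` G_pr m"
    then obtain T where T: "T \<subseteq> {1..m}" "T \<noteq> {1..m}" "x = mulseq E (fps_nth (QF T))"
      unfolding G_pr_def by auto
    define S where "S = {1..m} - T"
    have S: "S \<subseteq> {1..m}" "S \<noteq> {}" "{1..m} - S = T" using T unfolding S_def by auto
    have "x = P_column S" unfolding col[OF S(1)] S(3) T(3) ..
    then show "x \<in> {P_column S | S. S \<subseteq> {1..m} \<and> S \<noteq> {}}" using S by blast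
  qed
  have spG: "Q.span (G_pr m) = Q.span \<Delta>"
    unfolding Q.span_eq \<Delta>_def assms(2)
    using G_pr_span[of m] dl_pr[of _ m] by auto
  have inj: "inj (mulseq E)"
  proof (rule injI)
    fix f g assume "mulseq E f = mulseq E g"
    then have "mulseq D (mulseq E f) = mulseq D (mulseq E g)" by simp
    then show "f = g" using ED by (simp add: mulseq_mulseq mult.commute mulseq_1)
  qed
  have "P_rank m = Q.dim (mulseq E ` G_pr m)" unfolding P_rank_def C ..
  also have "\<dots> = Q.dim (Q.span (mulseq E ` G_pr m))" by simp
  also have "Q.span (mulseq E ` G_pr m) = Q.span (mulseq E ` \<Delta>)"
    by (simp add: span_mulseq spG)
  also have "Q.dim \<dots> = Q.dim (mulseq E ` \<Delta>)" by simp
  also have "\<dots> = card (mulseq E ` \<Delta>)"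
  proof (rule Q.dim_eq_card_independent)
    interpret L: Vector_Spaces.linear qscale qscale "mulseq E" by (rule lin)
    show "Q.independent (mulseq E ` \<Delta>)"
      using L.independent_injective_image[OF indep_dl[of n]] inj_on_subset[OF inj] \<Delta>_def by auto
  qed
  also have "\<dots> = card \<Delta>"
    using inj by (simp add: card_image inj_on_subset)
  also have "\<dots> = n" unfolding \<Delta>_def
    using inj_dl by (simp add: card_image inj_on_subset)
  finally show ?thesis .
qed

theorem theoremA:
  fixes m n :: nat
  assumes "m > 0" and "n = m * (m + 1) div 2"
  shows "P_rank m = n \<and>
    (\<forall>k S. k \<ge> n \<longrightarrow> S \<subseteq> {1..m} \<longrightarrow> S \<noteq> {} \<longrightarrow>
       int (part_count k S) =
         - (\<Sum>j = k - n..k - 1. coeff (cpoly m) (k - j) * int (part_count j S)))"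
  using rank[OF assms] recurrence[OF assms] by blast

end
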